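(* Let $\Gamma$ be a connected highly-regular graph with CAM $C=[c_{i,j}]_{1\le i,j\le m}$ and diameter $D=\operatorname{diam}(\Gamma)$, with chosen partitions $V_1(u)=\{u\},\dots,V_m(u)$ for each vertex $u$, and let $S_0,\dots,S_D$ be nonempty subsets of $\{1,\dots,m\}$ with $D_i(u)=\bigsqcup_{t\in S_i}V_t(u)$ for every vertex $u$ and every $i$. For $i\in\{1,\dots,D\}$ define $b_{i-1}^{\max}=\max\{\sum_{t\in S_i}c_{t,l}: l\in S_{i-1}\}$ and $c_i^{\max}=\max\{\sum_{t\in S_{i-1}}c_{t,l}: l\in S_i\}$. Assume $\Gamma$ satisfies: $(\star)$ for every vertex $u$, every $i\in\{0,1,\dots,D-1\}$ and every $x\in D_i(u)$, the set $D_1(x)\cap D_{i+1}(u)$ is nonempty. Then for all integers $i\ge1$, $j\ge 0$ with $i+j\le D$, we have $c_i^{\max}\le b_j^{\max}$.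
   Context: All graphs are finite, simple; $d(u,v)$ is graph distance and $D_i(u)=\{v:d(u,v)=i\}$. A graph $\Gamma$ of order $n$ is highly-regular with collapsed adjacency matrix (CAM) $C=[c_{i,j}]_{1\le i,j\le m}$, where $2\le m<n$ (the value $m=n$ is allowed only when $n=2$), if for every vertex $u$ there is a partition of $V(\Gamma)$ into nonempty sets $V_1(u)=\{u\},V_2(u),\dots,V_m(u)$ such that for all $i,j$, every vertex $y\in V_j(u)$ is adjacent to exactly $c_{i,j}$ vertices of $V_i(u)$. *)

theory Defs
  imports Main
begin

definition simple_graph :: "'a set \<Rightarrow> ('a \<Rightarrow> 'a \<Rightarrow> bool) \<Rightarrow> bool" where
  "simple_graph V E \<longleftrightarrow> finite V \<and>
     (\<forall>x y. E x y \<longrightarrow> x \<in> V \<and> y \<in> V \<and> x \<noteq> y \<and> E y x)"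

definition adj_rel :: "('a \<Rightarrow> 'a \<Rightarrow> bool) \<Rightarrow> ('a \<times> 'a) set" where
  "adj_rel E = {(x, y). E x y}"

definition gdist :: "('a \<Rightarrow> 'a \<Rightarrow> bool) \<Rightarrow> 'a \<Rightarrow> 'a \<Rightarrow> nat" where
  "gdist E u v = (LEAST n. (u, v) \<in> (adj_rel E) ^^ n)"

definition connected_graph :: "'a set \<Rightarrow> ('a \<Rightarrow> 'a \<Rightarrow> bool) \<Rightarrow> bool" where
  "connected_graph V E \<longleftrightarrow> (\<forall>u\<in>V. \<forall>v\<in>V. \<exists>n. (u, v) \<in> (adj_rel E) ^^ n)"

definition diam :: "'a set \<Rightarrow> ('a \<Rightarrow> 'a \<Rightarrow> bool) \<Rightarrow> nat" where
  "diam V E = Max {gdist E u v | u v. u \<in> V \<and> v \<in> V}"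

definition Dset :: "'a set \<Rightarrow> ('a \<Rightarrow> 'a \<Rightarrow> bool) \<Rightarrow> 'a \<Rightarrow> nat \<Rightarrow> 'a set" where
  "Dset V E u i = {v \<in> V. gdist E u v = i}"

definition highly_regular ::
  "'a set \<Rightarrow> ('a \<Rightarrow> 'a \<Rightarrow> bool) \<Rightarrow> nat \<Rightarrow> (nat \<Rightarrow> nat \<Rightarrow> nat) \<Rightarrow> ('a \<Rightarrow> nat \<Rightarrow> 'a set) \<Rightarrow> bool" where
  "highly_regular V E m c P \<longleftrightarrow> simple_graph V E \<and>
     2 \<le> m \<and> (m < card V \<or> (m = card V \<and> card V = 2)) \<and>
     (\<forall>u\<in>V. P u 1 = {u} \<and>
        (\<forall>i\<in>{1..m}. P u i \<noteq> {}) \<and>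
        (\<forall>i\<in>{1..m}. \<forall>j\<in>{1..m}. i \<noteq> j \<longrightarrow> P u i \<inter> P u j = {}) \<and>
        (\<Union>i\<in>{1..m}. P u i) = V \<and>
        (\<forall>i\<in>{1..m}. \<forall>j\<in>{1..m}. \<forall>y\<in>P u j. card {x \<in> P u i. E x y} = c i j))"

definition bmax :: "(nat \<Rightarrow> nat \<Rightarrow> nat) \<Rightarrow> (nat \<Rightarrow> nat set) \<Rightarrow> nat \<Rightarrow> nat" where
  "bmax c S j = Max {\<Sum>t\<in>S (j + 1). c t l | l. l \<in> S j}"

definition cmax :: "(nat \<Rightarrow> nat \<Rightarrow> nat) \<Rightarrow> (nat \<Rightarrow> nat set) \<Rightarrow> nat \<Rightarrow> nat" where
  "cmax c S i = Max {\<Sum>t\<in>S (i - 1). c t l | l. l \<in> S i}"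

end

theory Submission
  imports Defs
begin

lemma sg_E: "simple_graph V E \<Longrightarrow> E x y \<Longrightarrow> x \<in> V \<and> y \<in> V \<and> x \<noteq> y \<and> E y x"
  unfolding simple_graph_def by blast

lemma relpow_sym:
  assumes sg: "simple_graph V E"
  shows "(x, y) \<in> adj_rel E ^^ n \<Longrightarrow> (y, x) \<in> adj_rel E ^^ n"
proof (induction n arbitrary: y)
  case 0 then show ?case by simp
next
  case (Suc n)
  then obtain z where z: "(x, z) \<in> adj_rel E ^^ n" "E z y"
    by (auto simp: adj_rel_def)
  have "(z, x) \<in> adj_rel E ^^ n" using Suc.IH z(1) by blast
  moreover have "(y, z) \<in> adj_rel E" using sg_E[OF sg z(2)] by (simp add: adj_rel_def)
  ultimately show ?case by (metis relpow_Suc_I2)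
qed

lemma gdist_le: "(u, v) \<in> adj_rel E ^^ n \<Longrightarrow> gdist E u v \<le> n"
  unfolding gdist_def by (rule Least_le)

lemma gdist_path:
  assumes "connected_graph V E" "u \<in> V" "v \<in> V"
  shows "(u, v) \<in> adj_rel E ^^ gdist E u v"
proof -
  obtain n where "(u, v) \<in> adj_rel E ^^ n" using assms unfolding connected_graph_def by blast
  then show ?thesis unfolding gdist_def by (rule LeastI)
qed

lemma gdist_tri:
  assumes "connected_graph V E" "u \<in> V" "v \<in> V" "w \<in> V"
  shows "gdist E u w \<le> gdist E u v + gdist E v w"
proof -
  have "(u, w) \<in> adj_rel E ^^ (gdist E u v + gdist E v w)"
    using gdist_path[OF assms(1,2,3)] gdist_path[OF assms(1,3,4)]
    by (auto simp: relpow_add)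
  then show ?thesis by (rule gdist_le)
qed

lemma gdist_sym:
  assumes "simple_graph V E" "connected_graph V E" "u \<in> V" "v \<in> V"
  shows "gdist E u v = gdist E v u"
proof -
  have "gdist E v u \<le> gdist E u v"
    using gdist_le[OF relpow_sym[OF assms(1) gdist_path[OF assms(2,3,4)]]] .
  moreover have "gdist E u v \<le> gdist E v u"
    using gdist_le[OF relpow_sym[OF assms(1) gdist_path[OF assms(2,4,3)]]] .
  ultimately show ?thesis by simp
qed

lemma gdist_1_E:
  assumes "connected_graph V E" "u \<in> V" "v \<in> V" "gdist E u v = 1"
  shows "E u v"
  using gdist_path[OF assms(1,2,3)] assms(4) by (simp add: adj_rel_def)

lemma E_gdist_1:
  assumes "simple_graph V E" "E u v"
  shows "gdist E u v = 1"
proof -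
  have p: "(u, v) \<in> adj_rel E ^^ 1" using assms(2) by (simp add: adj_rel_def)
  then have "gdist E u v \<le> 1" by (rule gdist_le)
  moreover have "gdist E u v \<noteq> 0"
  proof
    assume "gdist E u v = 0"
    moreover have "(u, v) \<in> adj_rel E ^^ gdist E u v" unfolding gdist_def using p by (rule LeastI)
    ultimately show False using sg_E[OF assms] by simp
  qed
  ultimately show ?thesis by simp
qed

lemma sum_card:
  assumes hr: "highly_regular V E m c P" and v: "v \<in> V" and T: "T \<subseteq> {1..m}"
    and l: "l \<in> {1..m}" and y: "y \<in> P v l"
  shows "(\<Sum>t\<in>T. c t l) = card {x \<in> (\<Union>t\<in>T. P v t). E x y}"
proof -
  have fin: "finite V" using hr unfolding highly_regular_def simple_graph_def by blast
  have sub: "\<And>t. t \<in> {1..m} \<Longrightarrow> P v t \<subseteq> V" using hr v unfolding highly_regular_def by blast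
  have "(\<Sum>t\<in>T. c t l) = (\<Sum>t\<in>T. card {x \<in> P v t. E x y})"
  proof (rule sum.cong, simp)
    fix t assume "t \<in> T"
    then have "t \<in> {1..m}" using T by blast
    moreover have "\<forall>i\<in>{1..m}. \<forall>j\<in>{1..m}. \<forall>y\<in>P v j. card {x \<in> P v i. E x y} = c i j"
      using hr v unfolding highly_regular_def by blast
    ultimately show "c t l = card {x \<in> P v t. E x y}" using l y by metis
  qed
  also have "\<dots> = card (\<Union>t\<in>T. {x \<in> P v t. E x y})"
  proof (rule card_UN_disjoint[symmetric])
    show "finite T" using T finite_subset by blast
    show "\<forall>i\<in>T. finite {x \<in> P v i. E x y}"
    proof
      fix t assume "t \<in> T"
      then have "P v t \<subseteq> V" using sub T by blast
      then have "finite (P v t)" using fin finite_subset by blast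
      then show "finite {x \<in> P v t. E x y}" by simp
    qed
    show "\<forall>i\<in>T. \<forall>j\<in>T. i \<noteq> j \<longrightarrow> {x \<in> P v i. E x y} \<inter> {x \<in> P v j. E x y} = {}"
      using hr v T unfolding highly_regular_def by blast
  qed
  also have "(\<Union>t\<in>T. {x \<in> P v t. E x y}) = {x \<in> (\<Union>t\<in>T. P v t). E x y}" by blast
  finally show ?thesis .
qed

theorem proposition6p2:
  fixes V :: "'a set" and E :: "'a \<Rightarrow> 'a \<Rightarrow> bool" and m :: nat
    and c :: "nat \<Rightarrow> nat \<Rightarrow> nat" and P :: "'a \<Rightarrow> nat \<Rightarrow> 'a set"
    and S :: "nat \<Rightarrow> nat set" and i j :: nat
  assumes hr: "highly_regular V E m c P"
    and conn: "connected_graph V E"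
    and S_sub: "\<forall>k \<le> diam V E. S k \<noteq> {} \<and> S k \<subseteq> {1..m}"
    and S_D: "\<forall>u\<in>V. \<forall>k \<le> diam V E. Dset V E u k = (\<Union>t\<in>S k. P u t)"
    and star: "\<forall>u\<in>V. \<forall>k < diam V E. \<forall>x\<in>Dset V E u k.
                 Dset V E x 1 \<inter> Dset V E u (k + 1) \<noteq> {}"
    and i1: "1 \<le> i" and ij: "i + j \<le> diam V E"
  shows "cmax c S i \<le> bmax c S j"
proof -
  let ?D = "diam V E"
  have sg: "simple_graph V E" using hr unfolding highly_regular_def by blast
  have fin: "finite V" using sg unfolding simple_graph_def by blast
  have Vne: "V \<noteq> {}" using hr unfolding highly_regular_def by auto
  have Pne: "\<And>u t. u \<in> V \<Longrightarrow> t \<in> {1..m} \<Longrightarrow> P u t \<noteq> {}"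
    using hr unfolding highly_regular_def by blast
  have Si: "S i \<noteq> {}" "S i \<subseteq> {1..m}" using S_sub ij by auto
  have "cmax c S i \<in> {\<Sum>t\<in>S (i - 1). c t l | l. l \<in> S i}"
    unfolding cmax_def
    apply (rule Max_in)
    using Si finite_subset[OF Si(2)] by auto
  then obtain l where l: "l \<in> S i" and cl: "cmax c S i = (\<Sum>t\<in>S (i - 1). c t l)" by blast
  obtain v where v: "v \<in> V" using Vne by blast
  have lm: "l \<in> {1..m}" using l Si by blast
  obtain w where w: "w \<in> P v l" using Pne[OF v lm] by blast
  have wD: "w \<in> Dset V E v i" using S_D v ij l w by auto
  then have wV: "w \<in> V" and dvw: "gdist E v w = i" by (auto simp: Dset_def)
  have ext: "\<And>k. k \<le> j \<Longrightarrow> \<exists>y \<in> Dset V E v (i + k). (w, y) \<in> adj_rel E ^^ k"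
  proof -
    fix k assume "k \<le> j"
    then show "\<exists>y \<in> Dset V E v (i + k). (w, y) \<in> adj_rel E ^^ k"
    proof (induction k)
      case 0 then show ?case using wD by auto
    next
      case (Suc k)
      then obtain y where y: "y \<in> Dset V E v (i + k)" "(w, y) \<in> adj_rel E ^^ k" by auto
      have "i + k < ?D" using Suc.prems ij by simp
      then obtain z where z: "z \<in> Dset V E y 1" "z \<in> Dset V E v (i + k + 1)"
        using star v y(1) by blast
      have yV: "y \<in> V" using y by (simp add: Dset_def)
      have "E y z" using gdist_1_E[OF conn yV] z(1) by (simp add: Dset_def)
      then have "(w, z) \<in> adj_rel E ^^ Suc k" using y(2) by (auto simp: adj_rel_def)
      then show ?case using z(2) by auto
    qed
  qed
  obtain u where uD: "u \<in> Dset V E v (i + j)" and wu: "(w, u) \<in> adj_rel E ^^ j"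
    using ext by blast
  have uV: "u \<in> V" and dvu: "gdist E v u = i + j" using uD by (auto simp: Dset_def)
  have "gdist E u w \<le> j" using gdist_le[OF relpow_sym[OF sg wu]] .
  moreover have "gdist E v u \<le> gdist E v w + gdist E w u" using gdist_tri[OF conn v wV uV] .
  moreover have "gdist E w u = gdist E u w" using gdist_sym[OF sg conn wV uV] .
  ultimately have duw: "gdist E u w = j" using dvu dvw by simp
  have "w \<in> Dset V E u j" using duw wV by (simp add: Dset_def)
  then obtain l' where l': "l' \<in> S j" "w \<in> P u l'" using S_D uV ij by auto
  have Sj: "S j \<subseteq> {1..m}" using S_sub ij by auto
  have l'm: "l' \<in> {1..m}" using l'(1) Sj by blast
  have bl: "(\<Sum>t\<in>S (j + 1). c t l') \<le> bmax c S j"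
    unfolding bmax_def
    apply (rule Max_ge)
    using finite_subset[OF Sj] l'(1) by auto
  have "(\<Sum>t\<in>S (i - 1). c t l) = card {x \<in> Dset V E v (i - 1). E x w}"
    using sum_card[OF hr v _ lm w, of "S (i - 1)"] S_sub S_D v ij by auto
  also have "\<dots> \<le> card {x \<in> Dset V E u (j + 1). E x w}"
  proof (rule card_mono)
    show "finite {x \<in> Dset V E u (j + 1). E x w}" using fin by (simp add: Dset_def)
    show "{x \<in> Dset V E v (i - 1). E x w} \<subseteq> {x \<in> Dset V E u (j + 1). E x w}"
    proof safe
      fix x assume x: "x \<in> Dset V E v (i - 1)" "E x w"
      have xV: "x \<in> V" and dvx: "gdist E v x = i - 1" using x by (auto simp: Dset_def)
      have dwx: "gdist E w x = 1" using E_gdist_1[OF sg] sg_E[OF sg x(2)] by blast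
      have "gdist E u x \<le> gdist E u w + gdist E w x" using gdist_tri[OF conn uV wV xV] .
      moreover have "gdist E v u \<le> gdist E v x + gdist E x u" using gdist_tri[OF conn v xV uV] .
      moreover have "gdist E x u = gdist E u x" using gdist_sym[OF sg conn xV uV] .
      ultimately have "gdist E u x = j + 1" using dvu dvx dwx duw i1 by simp
      then show "x \<in> Dset V E u (j + 1)" using xV by (simp add: Dset_def)
    qed
  qed
  also have "\<dots> = (\<Sum>t\<in>S (j + 1). c t l')"
    using sum_card[OF hr uV _ l'm l'(2), of "S (j + 1)"] S_sub S_D uV ij i1 by auto
  finally show ?thesis using cl bl by simp
qed

end
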